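(* Let $G$ be a graph with an even number of edges. Suppose there is a positive integer $t$ such that $G$ contains at least $t$ pairwise vertex-disjoint induced copies of $F$ and $G$ contains no clique with more than $t$ vertices. Then $G$ is even-decomposable.
   Context: $F$ denotes the disjoint union of two vertex-disjoint copies of $K_{5,5}$. A graph $H$ is even-decomposable if there is a sequence $V(H)=V_0\supset V_1\supset\cdots\supset V_k=\emptyset$ such that for each $0\le i\le k-1$, $H[V_i]$ has an even number of edges and $V_i\setminus V_{i+1}$ is an independent set in $H$. *)

theory Defs
  imports Main
begin

definition graph :: "'a set \<Rightarrow> 'a set set \<Rightarrow> bool" where
  "graph V E \<longleftrightarrow> finite V \<and> (\<forall>e\<in>E. e \<subseteq> V \<and> card e = 2)"

definition induced_edges :: "'a set set \<Rightarrow> 'a set \<Rightarrow> 'a set set" where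
  "induced_edges E S = {e \<in> E. e \<subseteq> S}"

definition independent :: "'a set set \<Rightarrow> 'a set \<Rightarrow> bool" where
  "independent E S \<longleftrightarrow> (\<forall>x\<in>S. \<forall>y\<in>S. {x, y} \<notin> E)"

definition clique :: "'a set set \<Rightarrow> 'a set \<Rightarrow> bool" where
  "clique E K \<longleftrightarrow> (\<forall>x\<in>K. \<forall>y\<in>K. x \<noteq> y \<longrightarrow> {x, y} \<in> E)"

text \<open>The graph F = two disjoint copies of K_{5,5}, on vertex set {0..<20}:
  the first copy has parts {0..4}, {5..9}, the second has parts {10..14}, {15..19}.\<close>
definition F_verts :: "nat set" where
  "F_verts = {0..<20}"

definition F_edges :: "nat set set" where
  "F_edges = {{i, j} | i j. (i < 5 \<and> 5 \<le> j \<and> j < 10) \<or> (10 \<le> i \<and> i < 15 \<and> 15 \<le> j \<and> j < 20)}"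

definition induced_copy_F :: "'a set \<Rightarrow> 'a set set \<Rightarrow> (nat \<Rightarrow> 'a) \<Rightarrow> bool" where
  "induced_copy_F V E f \<longleftrightarrow> inj_on f F_verts \<and> f ` F_verts \<subseteq> V \<and>
     (\<forall>i\<in>F_verts. \<forall>j\<in>F_verts. ({f i, f j} \<in> E \<longleftrightarrow> {i, j} \<in> F_edges))"

definition even_decomposable :: "'a set \<Rightarrow> 'a set set \<Rightarrow> bool" where
  "even_decomposable V E \<longleftrightarrow> (\<exists>(W :: nat \<Rightarrow> 'a set) k.
     W 0 = V \<and> W k = {} \<and>
     (\<forall>i<k. W (Suc i) \<subset> W i \<and> even (card (induced_edges E (W i))) \<and>
            independent E (W i - W (Suc i))))"

end

theory Submission
  imports Defs
begin


definition ecnt :: "'a set set \<Rightarrow> 'a set \<Rightarrow> nat" where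
  "ecnt E S = card (induced_edges E S)"
definition dg :: "'a set set \<Rightarrow> 'a set \<Rightarrow> 'a \<Rightarrow> nat" where
  "dg E S v = card {u \<in> S. {u, v} \<in> E}"
definition mv :: "'a set set \<Rightarrow> 'a set \<Rightarrow> 'a set \<Rightarrow> bool" where
  "mv E S T \<longleftrightarrow> T \<subset> S \<and> independent E (S - T) \<and> even (ecnt E T)"
abbreviation reach where "reach E \<equiv> (mv E)\<^sup>*\<^sup>*"

lemma graph_finE: "graph V E \<Longrightarrow> finite E"
proof -
  assume "graph V E"
  then have "finite V" "E \<subseteq> Pow V" unfolding graph_def by auto
  then show "finite E" by (meson finite_Pow_iff finite_subset)
qed

lemma edge_card: "graph V E \<Longrightarrow> e \<in> E \<Longrightarrow> card e = 2"
  unfolding graph_def by auto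

lemma no_loop: "graph V E \<Longrightarrow> {x, x} \<notin> E"
  using edge_card by fastforce

lemma e_remove:
  assumes g: "graph V E" and v: "v \<in> S" and S: "S \<subseteq> V"
  shows "ecnt E S = ecnt E (S - {v}) + dg E S v"
proof -
  have fE: "finite E" using g graph_finE by blast
  have split: "induced_edges E S = induced_edges E (S - {v}) \<union> {e\<in>E. e \<subseteq> S \<and> v \<in> e}"
    unfolding induced_edges_def by auto
  have disj: "induced_edges E (S - {v}) \<inter> {e\<in>E. e \<subseteq> S \<and> v \<in> e} = {}"
    unfolding induced_edges_def by auto
  have bij: "bij_betw (\<lambda>u. {u, v}) {u \<in> S. {u, v} \<in> E} {e\<in>E. e \<subseteq> S \<and> v \<in> e}"
  proof (rule bij_betwI')
    fix x y assume "x \<in> {u \<in> S. {u, v} \<in> E}" "y \<in> {u \<in> S. {u, v} \<in> E}"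
    then show "({x, v} = {y, v}) = (x = y)" by (auto simp: doubleton_eq_iff)
  next
    fix x assume "x \<in> {u \<in> S. {u, v} \<in> E}" then show "{x, v} \<in> {e\<in>E. e \<subseteq> S \<and> v \<in> e}"
      using v by auto
  next
    fix e assume e: "e \<in> {e\<in>E. e \<subseteq> S \<and> v \<in> e}"
    then have "card e = 2" using edge_card g by blast
    then obtain x y where xy: "e = {x, y}" "x \<noteq> y" by (auto simp: card_2_iff)
    show "\<exists>x\<in>{u \<in> S. {u, v} \<in> E}. e = {x, v}"
    proof (cases "x = v")
      case True then show ?thesis using e xy by (auto simp: insert_commute)
    next
      case False then have "y = v" using e xy by auto
      then show ?thesis using e xy by auto
    qed
  qed
  have "card {e\<in>E. e \<subseteq> S \<and> v \<in> e} = dg E S v"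
    unfolding dg_def using bij_betw_same_card[OF bij] by simp
  moreover have "finite (induced_edges E (S - {v}))" "finite {e\<in>E. e \<subseteq> S \<and> v \<in> e}"
    using fE unfolding induced_edges_def by auto
  ultimately show ?thesis unfolding ecnt_def split by (simp add: card_Un_disjoint[OF _ _ disj])
qed

lemma dg_rm:
  assumes "finite S"
  shows "dg E (S - {c}) x = (if c \<in> S \<and> {c, x} \<in> E then dg E S x - 1 else dg E S x)"
proof -
  have "{u \<in> S - {c}. {u, x} \<in> E} = {u \<in> S. {u, x} \<in> E} - {c}" by auto
  then show ?thesis unfolding dg_def using assms by (auto simp: card_Diff_singleton_if)
qed

lemma dg_pos: "finite S \<Longrightarrow> c \<in> S \<Longrightarrow> {c, x} \<in> E \<Longrightarrow> dg E S x \<ge> 1"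
proof -
  assume a: "finite S" "c \<in> S" "{c, x} \<in> E"
  have "finite {u \<in> S. {u, x} \<in> E}" using a by auto
  moreover have "c \<in> {u \<in> S. {u, x} \<in> E}" using a by auto
  ultimately show ?thesis unfolding dg_def by (metis One_nat_def Suc_leI card_gt_0_iff empty_iff)
qed

lemma par_flip: "finite S \<Longrightarrow> c \<in> S \<Longrightarrow> {c, x} \<in> E \<Longrightarrow> even (dg E (S - {c}) x) \<longleftrightarrow> odd (dg E S x)"
  using dg_rm[where S=S and c=c and E=E and x=x] dg_pos[where S=S and c=c and E=E and x=x] by (cases "dg E S x") auto

lemma par_same: "{c, x} \<notin> E \<Longrightarrow> dg E (S - {c}) x = dg E S x"
  unfolding dg_def by (rule arg_cong[where f=card]) (auto)

lemma M1:
  assumes g: "graph V E" and S: "S \<subseteq> V" and "even (ecnt E S)" and v: "v \<in> S" and "even (dg E S v)"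
  shows "mv E S (S - {v})"
proof -
  have "even (ecnt E (S - {v}))" using e_remove[OF g v S] assms by simp
  moreover have "independent E (S - (S - {v}))" using v no_loop[OF g] unfolding independent_def by auto
  ultimately show ?thesis unfolding mv_def using v by auto
qed

lemma M2:
  assumes g: "graph V E" and S: "S \<subseteq> V" and "even (ecnt E S)" and u: "u \<in> S" and v: "v \<in> S"
    and uv: "u \<noteq> v" "{u, v} \<notin> E" and "odd (dg E S u)" "odd (dg E S v)"
  shows "mv E S (S - {u, v})"
proof -
  have 1: "ecnt E S = ecnt E (S - {u}) + dg E S u" using e_remove[OF g u S] .
  have 2: "ecnt E (S - {u}) = ecnt E (S - {u} - {v}) + dg E (S - {u}) v"
    using e_remove[OF g, of v "S - {u}"] v uv S by auto
  have 3: "dg E (S - {u}) v = dg E S v" using par_same uv by metis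
  have "S - {u} - {v} = S - {u, v}" by auto
  then have "even (ecnt E (S - {u, v}))" using 1 2 3 assms(3,8,9) by simp
  moreover have "independent E (S - (S - {u, v}))" using u v uv no_loop[OF g]
    unfolding independent_def by (auto simp: insert_commute)
  ultimately show ?thesis unfolding mv_def using u by auto
qed

lemma reach_good: "reach E S T \<Longrightarrow> even (ecnt E S) \<Longrightarrow> even (ecnt E T)"
  by (induction rule: rtranclp_induct) (auto simp: mv_def)

lemma reach_sub: "reach E S T \<Longrightarrow> T \<subseteq> S"
  by (induction rule: rtranclp_induct) (auto simp: mv_def)




definition fadj :: "nat \<Rightarrow> nat \<Rightarrow> bool" where
  "fadj i j \<longleftrightarrow> (i < 5 \<and> 5 \<le> j \<and> j < 10) \<or> (j < 5 \<and> 5 \<le> i \<and> i < 10) \<or>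
     (10 \<le> i \<and> i < 15 \<and> 15 \<le> j \<and> j < 20) \<or> (10 \<le> j \<and> j < 15 \<and> 15 \<le> i \<and> i < 20)"

lemma fadj_tri: "fadj i j \<Longrightarrow> fadj i k \<Longrightarrow> fadj j k \<Longrightarrow> False"
  unfolding fadj_def by (elim disjE conjE; linarith)

lemma F_adj: "{i, j} \<in> F_edges \<longleftrightarrow> fadj i j"
proof
  assume "{i, j} \<in> F_edges"
  then obtain a b where ab: "{i, j} = {a, b}"
    "(a < 5 \<and> 5 \<le> b \<and> b < 10) \<or> (10 \<le> a \<and> a < 15 \<and> 15 \<le> b \<and> b < 20)"
    unfolding F_edges_def by blast
  then have "(i = a \<and> j = b) \<or> (i = b \<and> j = a)" by (auto simp: doubleton_eq_iff)
  then show "fadj i j" using ab(2) unfolding fadj_def by auto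
next
  assume h: "fadj i j"
  show "{i, j} \<in> F_edges"
  proof (cases "i < j")
    case True
    then have *: "(i < 5 \<and> 5 \<le> j \<and> j < 10) \<or> (10 \<le> i \<and> i < 15 \<and> 15 \<le> j \<and> j < 20)"
      using h unfolding fadj_def by auto
    show ?thesis unfolding F_edges_def
      by (rule CollectI, rule exI[where x=i], rule exI[where x=j], rule conjI[OF refl *])
  next
    case False
    then have *: "(j < 5 \<and> 5 \<le> i \<and> i < 10) \<or> (10 \<le> j \<and> j < 15 \<and> 15 \<le> i \<and> i < 20)"
      using h unfolding fadj_def by auto
    have e: "{i, j} = {j, i}" by (rule insert_commute)
    show ?thesis unfolding F_edges_def
      by (rule CollectI, rule exI[where x=j], rule exI[where x=i], rule conjI[OF e *])
  qed
qed

lemma copy_adj: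
  assumes "induced_copy_F V E f" "i < 20" "j < 20"
  shows "{f i, f j} \<in> E \<longleftrightarrow> fadj i j"
  using assms F_adj unfolding induced_copy_F_def F_verts_def by auto

lemma copy_clique:
  assumes c: "induced_copy_F V E f" and K: "K \<subseteq> f ` F_verts" and cl: "clique E K"
  shows "card K \<le> 2"
proof (rule ccontr)
  assume "\<not> card K \<le> 2"
  then have "2 < card K" by simp
  then obtain x y z where xyz: "x \<in> K" "y \<in> K" "z \<in> K" "x \<noteq> y" "x \<noteq> z" "y \<noteq> z"
  proof -
    obtain T where "T \<subseteq> K" "card T = 3" using obtain_subset_with_card_n[of 3 K] \<open>2 < card K\<close> by auto
    then show ?thesis using that by (auto simp: card_3_iff)
  qed
  obtain i where i: "i < 20" "x = f i" using K xyz unfolding F_verts_def by auto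
  obtain j where j: "j < 20" "y = f j" using K xyz unfolding F_verts_def by auto
  obtain k where k: "k < 20" "z = f k" using K xyz unfolding F_verts_def by auto
  have "{f i, f j} \<in> E" "{f i, f k} \<in> E" "{f j, f k} \<in> E"
    using cl xyz i(2) j(2) k(2) unfolding clique_def by blast+
  then have "fadj i j" "fadj i k" "fadj j k"
    using copy_adj[OF c] i(1) j(1) k(1) by blast+
  then show False using fadj_tri by blast
qed




lemma greedy:
  assumes g: "graph V E"
  shows "W \<subseteq> V \<Longrightarrow> Y \<subseteq> W \<Longrightarrow> even (ecnt E W) \<Longrightarrow>
    \<exists>Y'. Y' \<subseteq> Y \<and> clique E Y' \<and> reach E W (Y' \<union> (W - Y))"
proof (induction "card Y" arbitrary: W Y rule: less_induct)
  case less
  have fV: "finite V" using g unfolding graph_def by auto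
  have fY: "finite Y" using finite_subset[OF subset_trans[OF less.prems(2,1)] fV] .
  show ?case
  proof (cases "clique E Y")
    case True
    have "Y \<union> (W - Y) = W" using less.prems by auto
    then show ?thesis using True by auto
  next
    case False
    then obtain y1 y2 where y: "y1 \<in> Y" "y2 \<in> Y" "y1 \<noteq> y2" "{y1, y2} \<notin> E"
      unfolding clique_def by auto
    show ?thesis
    proof (cases "\<exists>y\<in>Y. even (dg E W y)")
      case True
      then obtain y where yy: "y \<in> Y" "even (dg E W y)" by auto
      have m: "mv E W (W - {y})" using M1[OF g] less.prems yy by blast
      have c1: "card (Y - {y}) < card Y" using card_Diff1_less[OF fY yy(1)] .
      have c2: "W - {y} \<subseteq> V" "Y - {y} \<subseteq> W - {y}" "even (ecnt E (W - {y}))"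
        using less.prems m unfolding mv_def by auto
      obtain Y' where Y': "Y' \<subseteq> Y - {y}" "clique E Y'"
        "reach E (W - {y}) (Y' \<union> (W - {y} - (Y - {y})))"
        using less.hyps[OF c1 c2] by blast
      have "W - {y} - (Y - {y}) = W - Y" using yy(1) by auto
      then have "reach E W (Y' \<union> (W - Y))" using Y' m by (metis converse_rtranclp_into_rtranclp)
      then show ?thesis using Y' by blast
    next
      case False
      then have o: "odd (dg E W y1)" "odd (dg E W y2)" using y by auto
      have m: "mv E W (W - {y1, y2})" using M2[OF g _ _ _ _ y(3,4) o] less.prems y by blast
      have c1: "card (Y - {y1, y2}) < card Y" by (rule psubset_card_mono[OF fY]) (use y in auto)
      have c2: "W - {y1, y2} \<subseteq> V" "Y - {y1, y2} \<subseteq> W - {y1, y2}" "even (ecnt E (W - {y1, y2}))"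
        using less.prems m unfolding mv_def by auto
      obtain Y' where Y': "Y' \<subseteq> Y - {y1, y2}" "clique E Y'"
        "reach E (W - {y1, y2}) (Y' \<union> (W - {y1, y2} - (Y - {y1, y2})))"
        using less.hyps[OF c1 c2] by blast
      have "W - {y1, y2} - (Y - {y1, y2}) = W - Y" using y(1,2) by auto
      then have "reach E W (Y' \<union> (W - Y))" using Y' m by (metis converse_rtranclp_into_rtranclp)
      then show ?thesis using Y' by blast
    qed
  qed
qed




lemma r_step: "mv E S T \<Longrightarrow> reach E T U \<Longrightarrow> reach E S U"
  by (rule converse_rtranclp_into_rtranclp)

lemma mv_good: "mv E S T \<Longrightarrow> even (ecnt E T)" unfolding mv_def by auto
lemma mv_sub: "mv E S T \<Longrightarrow> T \<subseteq> S" unfolding mv_def by auto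

lemma finS: "graph V E \<Longrightarrow> S \<subseteq> V \<Longrightarrow> finite S"
  unfolding graph_def using finite_subset by blast

lemma caseC:
  assumes g: "graph V E" and S: "S \<subseteq> V" "even (ecnt E S)"
    and c: "c \<in> S" and q: "q \<in> S" "c \<noteq> q" and cq: "{c, q} \<in> E"
    and pc: "even (dg E S c)" and pq: "odd (dg E S q)"
  shows "reach E S (S - {c, q})"
proof -
  have m1: "mv E S (S - {c})" using M1[OF g S c pc] .
  have fS: "finite S" using finS[OF g S(1)] .
  have "even (dg E (S - {c}) q)" using par_flip[OF fS c cq] pq by simp
  then have m2: "mv E (S - {c}) (S - {c} - {q})"
    using M1[OF g _ mv_good[OF m1]] S q by auto
  have "S - {c} - {q} = S - {c, q}" by auto
  then show ?thesis using m1 m2 by (metis r_step r_into_rtranclp)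
qed

lemma caseD1:
  assumes g: "graph V E" and S: "S \<subseteq> V" "even (ecnt E S)"
    and in_S: "c \<in> S" "c' \<in> S" "q \<in> S" and d: "c \<noteq> c'" "c \<noteq> q" "c' \<noteq> q"
    and e: "{c, c'} \<in> E" "{c, q} \<notin> E" "{c', q} \<notin> E"
    and p: "even (dg E S c)" "even (dg E S c')" "odd (dg E S q)"
  shows "reach E S (S - {c, c', q})"
proof -
  have m1: "mv E S (S - {c})" using M1[OF g S in_S(1) p(1)] .
  have fS: "finite S" using finS[OF g S(1)] .
  have 1: "odd (dg E (S - {c}) c')" using par_flip[OF fS in_S(1) e(1)] p by simp
  have 2: "odd (dg E (S - {c}) q)" using par_same[OF e(2)] p by simp
  have e3: "{q, c'} \<notin> E" using e(3) by (simp add: insert_commute)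
  have m2: "mv E (S - {c}) (S - {c} - {q, c'})"
    using M2[OF g _ mv_good[OF m1] _ _ _ e3 2 1] S in_S d by auto
  have "S - {c} - {q, c'} = S - {c, c', q}" by auto
  then show ?thesis using m1 m2 by (metis r_step r_into_rtranclp)
qed

lemma caseD2:
  assumes g: "graph V E" and S: "S \<subseteq> V" "even (ecnt E S)"
    and in_S: "c \<in> S" "c' \<in> S" "q \<in> S" and d: "c \<noteq> c'" "c \<noteq> q" "c' \<noteq> q"
    and e: "{c, c'} \<in> E" "{c, q} \<notin> E" "{c', q} \<in> E"
    and p: "even (dg E S c)" "odd (dg E S c')" "odd (dg E S q)"
  shows "reach E S (S - {c, c', q})"
proof -
  have m1: "mv E S (S - {c})" using M1[OF g S in_S(1) p(1)] .
  have fS: "finite S" using finS[OF g S(1)] .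
  have 1: "even (dg E (S - {c}) c')" using par_flip[OF fS in_S(1) e(1)] p by simp
  have 2: "odd (dg E (S - {c}) q)" using par_same[OF e(2)] p by simp
  have r: "reach E (S - {c}) (S - {c} - {c', q})"
    using caseC[OF g _ mv_good[OF m1] _ _ _ e(3) 1 2] S in_S d by auto
  have "S - {c} - {c', q} = S - {c, c', q}" by auto
  then show ?thesis using m1 r by (metis r_step)
qed

lemma caseE:
  assumes g: "graph V E" and S: "S \<subseteq> V" "even (ecnt E S)"
    and in_S: "a \<in> S" "a' \<in> S" "b \<in> S" "q \<in> S"
    and d: "a \<noteq> a'" "a \<noteq> b" "a' \<noteq> b" "a \<noteq> q" "a' \<noteq> q" "b \<noteq> q"
    and e: "{a, a'} \<notin> E" "{a, b} \<in> E" "{a', b} \<notin> E" "{a, q} \<in> E" "{a', q} \<in> E" "{b, q} \<in> E"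
    and p: "odd (dg E S a)" "odd (dg E S a')" "odd (dg E S b)" "odd (dg E S q)"
  shows "reach E S (S - {a, a', b, q})"
proof -
  have m1: "mv E S (S - {a, a'})" using M2[OF g S in_S(1,2) d(1) e(1) p(1,2)] .
  have fS: "finite S" using finS[OF g S(1)] .
  have fS1: "finite (S - {a})" using fS by auto
  have eq: "S - {a, a'} = S - {a} - {a'}" by auto
  have b1: "even (dg E (S - {a}) b)" using par_flip[OF fS in_S(1) e(2)] p by simp
  have b2: "even (dg E (S - {a, a'}) b)" unfolding eq using par_same[OF e(3)] b1 by simp
  have q1: "even (dg E (S - {a}) q)" using par_flip[OF fS in_S(1) e(4)] p by simp
  have q2: "odd (dg E (S - {a, a'}) q)" unfolding eq
    using par_flip[OF fS1 _ e(5)] q1 in_S d by simp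
  have r: "reach E (S - {a, a'}) (S - {a, a'} - {b, q})"
    using caseC[OF g _ mv_good[OF m1] _ _ _ e(6) b2 q2] S in_S d by auto
  have "S - {a, a'} - {b, q} = S - {a, a', b, q}" by auto
  then show ?thesis using m1 r by (metis r_step)
qed




lemma round:
  assumes g: "graph V E" and S: "S \<subseteq> V" "even (ecnt E S)"
    and Q: "Q \<subseteq> S" "clique E Q" "q0 \<in> Q"
    and inS: "a \<in> S" "b \<in> S" "a' \<in> S" "b' \<in> S"
    and nQ: "a \<notin> Q" "b \<notin> Q" "a' \<notin> Q" "b' \<notin> Q"
    and d: "a \<noteq> b" "a \<noteq> a'" "a \<noteq> b'" "b \<noteq> a'" "b \<noteq> b'" "a' \<noteq> b'"
    and e: "{a, b} \<in> E" "{a', b'} \<in> E" "{a, a'} \<notin> E" "{a, b'} \<notin> E" "{b, a'} \<notin> E" "{b, b'} \<notin> E"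
  shows "\<exists>q R. q \<in> Q \<and> q \<in> R \<and> R \<subseteq> insert q {a, b, a', b'} \<and> reach E S (S - R)"
proof (cases "\<exists>q\<in>Q. even (dg E S q)")
  case True
  then obtain q where q: "q \<in> Q" "even (dg E S q)" by auto
  have "mv E S (S - {q})" using M1[OF g S _ q(2)] q Q by auto
  then have "reach E S (S - {q})" by (rule r_into_rtranclp)
  then show ?thesis using q by (intro exI[of _ q] exI[of _ "{q}"]) auto
next
  case False
  then have hQ: "\<And>q. q \<in> Q \<Longrightarrow> odd (dg E S q)" by auto
  define G where "G = {a, b, a', b'}"
  have GS: "G \<subseteq> S" using inS G_def by auto
  have GQ: "\<And>c q. c \<in> G \<Longrightarrow> q \<in> Q \<Longrightarrow> c \<noteq> q" using nQ G_def by auto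
  show ?thesis
  proof (cases "\<exists>q\<in>Q. \<exists>c\<in>G. {c, q} \<notin> E \<and> odd (dg E S c)")
    case True
    then obtain q c where qc: "q \<in> Q" "c \<in> G" "{c, q} \<notin> E" "odd (dg E S c)" by auto
    have e1: "{q, c} \<notin> E" using qc(3) by (simp add: insert_commute)
    have "mv E S (S - {q, c})"
      using M2[OF g S _ _ _ e1 hQ[OF qc(1)] qc(4)] qc GS Q GQ[OF qc(2,1)] by auto
    then have "reach E S (S - {q, c})" by (rule r_into_rtranclp)
    moreover have "{q, c} \<subseteq> insert q {a, b, a', b'}" using qc unfolding G_def by auto
    ultimately show ?thesis using qc by (intro exI[of _ q] exI[of _ "{q, c}"]) auto
  next
    case False
    then have hB: "\<And>q c. q \<in> Q \<Longrightarrow> c \<in> G \<Longrightarrow> odd (dg E S c) \<Longrightarrow> {c, q} \<in> E" by auto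
    show ?thesis
    proof (cases "\<exists>q\<in>Q. \<exists>c\<in>G. {c, q} \<in> E \<and> even (dg E S c)")
      case True
      then obtain q c where qc: "q \<in> Q" "c \<in> G" "{c, q} \<in> E" "even (dg E S c)" by auto
      have "reach E S (S - {c, q})"
        using caseC[OF g S _ _ _ qc(3,4) hQ[OF qc(1)]] qc GS Q GQ[OF qc(2,1)] by auto
      moreover have "{c, q} \<subseteq> insert q {a, b, a', b'}" using qc unfolding G_def by auto
      ultimately show ?thesis using qc by (intro exI[of _ q] exI[of _ "{c, q}"]) auto
    next
      case False
      then have hC: "\<And>q c. q \<in> Q \<Longrightarrow> c \<in> G \<Longrightarrow> even (dg E S c) \<Longrightarrow> {c, q} \<notin> E" by auto
      have q0S: "q0 \<in> S" using Q by auto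
      have partner: "\<And>c. c \<in> G \<Longrightarrow> \<exists>c'\<in>G. c \<noteq> c' \<and> {c, c'} \<in> E"
        using e d unfolding G_def by (auto simp: insert_commute)
      show ?thesis
      proof (cases "\<exists>c\<in>G. even (dg E S c)")
        case True
        then obtain c where c: "c \<in> G" "even (dg E S c)" by auto
        obtain c' where c': "c' \<in> G" "c \<noteq> c'" "{c, c'} \<in> E" using partner[OF c(1)] by auto
        have n1: "{c, q0} \<notin> E" using hC[OF Q(3) c] .
        have sub: "{c, c', q0} \<subseteq> insert q0 {a, b, a', b'}" using c c' unfolding G_def by auto
        show ?thesis
        proof (cases "even (dg E S c')")
          case True
          have "reach E S (S - {c, c', q0})"
            using caseD1[OF g S _ _ q0S c'(2) GQ[OF c(1) Q(3)] GQ[OF c'(1) Q(3)] c'(3) n1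
                hC[OF Q(3) c'(1) True] c(2) True hQ[OF Q(3)]] c(1) c'(1) GS by auto
          then show ?thesis using sub Q(3) by (intro exI[of _ q0] exI[of _ "{c, c', q0}"]) auto
        next
          case False
          then have o: "odd (dg E S c')" by simp
          have "reach E S (S - {c, c', q0})"
            using caseD2[OF g S _ _ q0S c'(2) GQ[OF c(1) Q(3)] GQ[OF c'(1) Q(3)] c'(3) n1
                hB[OF Q(3) c'(1) o] c(2) o hQ[OF Q(3)]] c(1) c'(1) GS by auto
          then show ?thesis using sub Q(3) by (intro exI[of _ q0] exI[of _ "{c, c', q0}"]) auto
        qed
      next
        case False
        then have allodd: "\<And>c. c \<in> G \<Longrightarrow> odd (dg E S c)" by auto
        have aG: "a \<in> G" and a'G: "a' \<in> G" and bG: "b \<in> G" unfolding G_def by auto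
        have e3: "{a', b} \<notin> E" using e(5) by (simp add: insert_commute)
        have "reach E S (S - {a, a', b, q0})"
          using caseE[OF g S inS(1) inS(3) inS(2) q0S d(2) d(1) d(4)[symmetric]
              GQ[OF aG Q(3)] GQ[OF a'G Q(3)] GQ[OF bG Q(3)] e(3) e(1) e3
              hB[OF Q(3) aG allodd[OF aG]] hB[OF Q(3) a'G allodd[OF a'G]] hB[OF Q(3) bG allodd[OF bG]]
              allodd[OF aG] allodd[OF a'G] allodd[OF bG] hQ[OF Q(3)]] .
        moreover have "{a, a', b, q0} \<subseteq> insert q0 {a, b, a', b'}" by auto
        ultimately show ?thesis using Q(3) by (intro exI[of _ q0] exI[of _ "{a, a', b, q0}"]) auto
      qed
    qed
  qed
qed




definition gad :: "(nat \<Rightarrow> 'a) \<Rightarrow> nat \<Rightarrow> 'a set" where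
  "gad f r = {f r, f (5 + r), f (10 + r), f (15 + r)}"

lemma clique_sub: "clique E Q \<Longrightarrow> Q' \<subseteq> Q \<Longrightarrow> clique E Q'"
  unfolding clique_def by blast

lemma gad_sub: "r < 5 \<Longrightarrow> gad f r \<subseteq> f ` F_verts"
  unfolding gad_def F_verts_def by auto

lemma gad_disj:
  assumes c: "induced_copy_F V E f" and r: "r < 5" "r' < 5" "r \<noteq> r'"
  shows "gad f r \<inter> gad f r' = {}"
proof -
  have inj: "inj_on f {0..<20}" using c unfolding induced_copy_F_def F_verts_def by auto
  show ?thesis unfolding gad_def using r by (auto simp: inj_on_eq_iff[OF inj])
qed

lemma gad_props:
  assumes c: "induced_copy_F V E f" and r: "r < 5"
  shows "f r \<noteq> f (5 + r)" "f r \<noteq> f (10 + r)" "f r \<noteq> f (15 + r)" "f (5 + r) \<noteq> f (10 + r)"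
    "f (5 + r) \<noteq> f (15 + r)" "f (10 + r) \<noteq> f (15 + r)"
    "{f r, f (5 + r)} \<in> E" "{f (10 + r), f (15 + r)} \<in> E" "{f r, f (10 + r)} \<notin> E"
    "{f r, f (15 + r)} \<notin> E" "{f (5 + r), f (10 + r)} \<notin> E" "{f (5 + r), f (15 + r)} \<notin> E"
proof -
  have inj: "inj_on f {0..<20}" using c unfolding induced_copy_F_def F_verts_def by auto
  have i: "\<And>i j. i < 20 \<Longrightarrow> j < 20 \<Longrightarrow> f i = f j \<Longrightarrow> i = j" using inj unfolding inj_on_def by auto
  show "f r \<noteq> f (5 + r)" "f r \<noteq> f (10 + r)" "f r \<noteq> f (15 + r)" "f (5 + r) \<noteq> f (10 + r)"
    "f (5 + r) \<noteq> f (15 + r)" "f (10 + r) \<noteq> f (15 + r)" using i[of r "5 + r"] i[of r "10 + r"]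
    i[of r "15 + r"] i[of "5 + r" "10 + r"] i[of "5 + r" "15 + r"] i[of "10 + r" "15 + r"] r by auto
  show "{f r, f (5 + r)} \<in> E" "{f (10 + r), f (15 + r)} \<in> E" "{f r, f (10 + r)} \<notin> E"
    "{f r, f (15 + r)} \<notin> E" "{f (5 + r), f (10 + r)} \<notin> E" "{f (5 + r), f (15 + r)} \<notin> E"
    using copy_adj[OF c, of r "5 + r"] copy_adj[OF c, of "10 + r" "15 + r"] copy_adj[OF c, of r "10 + r"]
      copy_adj[OF c, of r "15 + r"] copy_adj[OF c, of "5 + r" "10 + r"] copy_adj[OF c, of "5 + r" "15 + r"] r
    unfolding fadj_def by auto
qed

lemma rounds:
  assumes g: "graph V E" and c: "induced_copy_F V E f"
  shows "k \<le> 5 \<Longrightarrow> S \<subseteq> V \<Longrightarrow> even (ecnt E S) \<Longrightarrow> Q \<subseteq> S \<Longrightarrow> clique E Q \<Longrightarrow>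
    Q \<inter> f ` F_verts = {} \<Longrightarrow> f ` F_verts \<subseteq> S \<Longrightarrow>
    \<exists>S'. reach E S S' \<and> S' \<subseteq> S \<and> S - S' \<subseteq> Q \<union> (\<Union>r<k. gad f r) \<and>
      card (S' \<inter> Q) = card Q - min (card Q) k"
proof (induction k)
  case 0
  then have "S \<inter> Q = Q" by auto
  then show ?case by (intro exI[of _ S]) auto
next
  case (Suc k)
  then obtain S1 where S1: "reach E S S1" "S1 \<subseteq> S" "S - S1 \<subseteq> Q \<union> (\<Union>r<k. gad f r)"
    "card (S1 \<inter> Q) = card Q - min (card Q) k" by auto
  have fQ: "finite Q" using finS[OF g] Suc.prems by blast
  show ?case
  proof (cases "S1 \<inter> Q = {}")
    case True
    then have "card Q \<le> k" using S1(4) by auto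
    then have "card (S1 \<inter> Q) = card Q - min (card Q) (Suc k)" using True by simp
    moreover have "S - S1 \<subseteq> Q \<union> (\<Union>r<Suc k. gad f r)" using S1(3) by auto
    ultimately show ?thesis using S1 by blast
  next
    case False
    then obtain q0 where q0: "q0 \<in> S1 \<inter> Q" by auto
    have k5: "k < 5" using Suc.prems by auto
    have gk: "gad f k \<subseteq> f ` F_verts" using gad_sub[OF k5] .
    have gdisj: "gad f k \<inter> (\<Union>r<k. gad f r) = {}"
    proof -
      { fix x r assume h: "x \<in> gad f k" "x \<in> gad f r" "r < k"
        then have "gad f k \<inter> gad f r = {}" using gad_disj[OF c k5, of r] k5 by auto
        then have False using h by blast }
      then show ?thesis by blast
    qed
    have gQ: "gad f k \<inter> Q = {}" using gk Suc.prems(6) by auto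
    have gS1: "gad f k \<subseteq> S1"
    proof
      fix x assume x: "x \<in> gad f k"
      then have "x \<in> S" using gk Suc.prems(7) by auto
      moreover have "x \<notin> Q" using x gQ by auto
      moreover have "x \<notin> (\<Union>r<k. gad f r)" using x gdisj by auto
      ultimately show "x \<in> S1" using S1(3) by auto
    qed
    have S1V: "S1 \<subseteq> V" using S1(2) Suc.prems by auto
    have S1e: "even (ecnt E S1)" using reach_good[OF S1(1) Suc.prems(3)] .
    have Q1: "S1 \<inter> Q \<subseteq> S1" "clique E (S1 \<inter> Q)" using clique_sub[OF Suc.prems(5)] by auto
    note gp = gad_props[OF c k5]
    have gin: "f k \<in> S1" "f (5 + k) \<in> S1" "f (10 + k) \<in> S1" "f (15 + k) \<in> S1"
      using gS1 unfolding gad_def by auto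
    have gnQ: "f k \<notin> S1 \<inter> Q" "f (5 + k) \<notin> S1 \<inter> Q" "f (10 + k) \<notin> S1 \<inter> Q" "f (15 + k) \<notin> S1 \<inter> Q"
      using gQ unfolding gad_def by auto
    obtain q R where qR: "q \<in> S1 \<inter> Q" "q \<in> R" "R \<subseteq> insert q (gad f k)" "reach E S1 (S1 - R)"
      using round[OF g S1V S1e Q1 q0 gin gnQ gp] unfolding gad_def by blast
    have "reach E S (S1 - R)" using S1(1) qR(4) by (rule rtranclp_trans)
    moreover have "S1 - R \<subseteq> S" using S1(2) by auto
    moreover have "S - (S1 - R) \<subseteq> Q \<union> (\<Union>r<Suc k. gad f r)" using S1(3) qR(1,3) by auto
    moreover have "(S1 - R) \<inter> Q = (S1 \<inter> Q) - {q}" using qR(1,2,3) gQ by auto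
    moreover have "card ((S1 \<inter> Q) - {q}) = card Q - min (card Q) (Suc k)"
    proof -
      have "finite (S1 \<inter> Q)" using fQ by auto
      then have "card (S1 \<inter> Q) \<ge> 1" using qR(1) by (metis One_nat_def Suc_leI card_gt_0_iff empty_iff)
      then show ?thesis using S1(4) qR(1) by (simp add: card_Diff_singleton)
    qed
    ultimately show ?thesis by (intro exI[of _ "S1 - R"]) auto
  qed
qed




lemma copy_step:
  assumes g: "graph V E" and c: "induced_copy_F V E f"
    and S: "S \<subseteq> V" "even (ecnt E S)" and Q: "Q \<subseteq> S" "clique E Q" "Q \<inter> f ` F_verts = {}"
    and C: "f ` F_verts \<subseteq> S"
  shows "\<exists>Y'. Y' \<subseteq> Q \<union> f ` F_verts \<and> clique E Y' \<and> card Y' \<le> max 2 (card Q - 1) \<and>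
    reach E S (Y' \<union> (S - (Q \<union> f ` F_verts)))"
proof -
  obtain S1 where S1: "reach E S S1" "S1 \<subseteq> S" "S - S1 \<subseteq> Q \<union> (\<Union>r<3. gad f r)"
      "card (S1 \<inter> Q) = card Q - min (card Q) 3"
    using rounds[OF g c, of 3 S Q] S Q C by auto
  have gC: "(\<Union>r<3. gad f r) \<subseteq> f ` F_verts"
  proof (rule UN_least)
    fix r :: nat assume "r \<in> {..<3}" then show "gad f r \<subseteq> f ` F_verts" using gad_sub[of r f] by auto
  qed
  have S1V: "S1 \<subseteq> V" using S1(2) S by auto
  have S1e: "even (ecnt E S1)" using reach_good[OF S1(1) S(2)] .
  obtain Y' where Y': "Y' \<subseteq> S1 \<inter> (Q \<union> f ` F_verts)" "clique E Y'"
    "reach E S1 (Y' \<union> (S1 - S1 \<inter> (Q \<union> f ` F_verts)))"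
    using greedy[OF g S1V _ S1e, of "S1 \<inter> (Q \<union> f ` F_verts)"] by auto
  have eq: "S1 - S1 \<inter> (Q \<union> f ` F_verts) = S - (Q \<union> f ` F_verts)" using S1(2,3) gC by auto
  have fQ: "finite Q" using finS[OF g] S Q by blast
  have fC: "finite (f ` F_verts)" unfolding F_verts_def by auto
  have "card Y' \<le> card (Y' \<inter> Q) + card (Y' \<inter> f ` F_verts)"
  proof -
    have "Y' = (Y' \<inter> Q) \<union> (Y' \<inter> f ` F_verts)" using Y'(1) by auto
    then show ?thesis by (metis card_Un_le)
  qed
  moreover have "card (Y' \<inter> Q) \<le> card Q - min (card Q) 3"
  proof -
    have "Y' \<inter> Q \<subseteq> S1 \<inter> Q" using Y'(1) by auto
    then show ?thesis using S1(4) card_mono[of "S1 \<inter> Q" "Y' \<inter> Q"] fQ by auto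
  qed
  moreover have "card (Y' \<inter> f ` F_verts) \<le> 2"
    using copy_clique[OF c _ clique_sub[OF Y'(2)]] by auto
  ultimately have "card Y' \<le> max 2 (card Q - 1)" by linarith
  then show ?thesis using Y' eq S1(1) rtranclp_trans[OF S1(1) Y'(3)]
    by (intro exI[of _ Y']) auto
qed

lemma claim:
  assumes g: "graph V E" and cps: "\<forall>i<t. induced_copy_F V E (cp i)"
    and dsj: "\<forall>i<t. \<forall>j<t. i \<noteq> j \<longrightarrow> cp i ` F_verts \<inter> cp j ` F_verts = {}"
    and cl: "\<forall>K. K \<subseteq> V \<and> clique E K \<longrightarrow> card K \<le> t"
  shows "m \<le> t \<Longrightarrow> S \<subseteq> V \<Longrightarrow> Y \<subseteq> S \<Longrightarrow> even (ecnt E S) \<Longrightarrow> (\<forall>j<m. cp j ` F_verts \<subseteq> Y) \<Longrightarrow>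
    \<exists>Y'. Y' \<subseteq> Y \<and> clique E Y' \<and> card Y' \<le> max 2 (t - m) \<and> reach E S (Y' \<union> (S - Y))"
proof (induction m arbitrary: S Y)
  case 0
  obtain Y' where Y': "Y' \<subseteq> Y" "clique E Y'" "reach E S (Y' \<union> (S - Y))"
    using greedy[OF g 0(2,3,4)] by auto
  have "card Y' \<le> t" using cl Y' 0(2,3) by auto
  then show ?case using Y' by (intro exI[of _ Y']) auto
next
  case (Suc m)
  define C where "C = cp m ` F_verts"
  have mt: "m < t" using Suc.prems by auto
  have cm: "induced_copy_F V E (cp m)" using cps mt by auto
  have CY: "C \<subseteq> Y" using Suc.prems(5) C_def by auto
  have Y0: "\<forall>j<m. cp j ` F_verts \<subseteq> Y - C"
  proof (intro allI impI)
    fix j assume j: "j < m"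
    then have "cp j ` F_verts \<inter> C = {}" using dsj mt C_def by auto
    moreover have "j < Suc m" using j by simp
    then have "cp j ` F_verts \<subseteq> Y" using Suc.prems(5) by blast
    ultimately show "cp j ` F_verts \<subseteq> Y - C" by blast
  qed
  obtain Q where Q: "Q \<subseteq> Y - C" "clique E Q" "card Q \<le> max 2 (t - m)"
    "reach E S (Q \<union> (S - (Y - C)))"
    using Suc.IH[of S "Y - C"] Suc.prems Y0 by auto
  define S1 where "S1 = Q \<union> (S - (Y - C))"
  have S1V: "S1 \<subseteq> V" using S1_def Q(1) Suc.prems by auto
  have S1e: "even (ecnt E S1)" using reach_good[OF Q(4) Suc.prems(4)] S1_def by simp
  have QS1: "Q \<subseteq> S1" using S1_def by auto
  have QC: "Q \<inter> cp m ` F_verts = {}" using Q(1) C_def by auto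
  have CS1: "cp m ` F_verts \<subseteq> S1" using CY Suc.prems(3) S1_def C_def by auto
  obtain Y' where Y': "Y' \<subseteq> Q \<union> C" "clique E Y'" "card Y' \<le> max 2 (card Q - 1)"
    "reach E S1 (Y' \<union> (S1 - (Q \<union> C)))"
    using copy_step[OF g cm S1V S1e QS1 Q(2) QC CS1] C_def by auto
  have eq: "S1 - (Q \<union> C) = S - Y" using S1_def Q(1) CY by auto
  have "card Y' \<le> max 2 (t - Suc m)" using Y'(3) Q(3) by (simp add: max_def split: if_splits; arith)
  moreover have "reach E S (Y' \<union> (S - Y))"
  proof -
    have "reach E S S1" using Q(4) S1_def by simp
    from rtranclp_trans[OF this Y'(4)] show ?thesis using eq by simp
  qed
  moreover have "Y' \<subseteq> Y" using Y'(1) Q(1) CY by auto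
  ultimately show ?case using Y'(2) by blast
qed

lemma chain:
  "reach E S T \<Longrightarrow> even (ecnt E S) \<Longrightarrow> \<exists>(W :: nat \<Rightarrow> 'a set) k. W 0 = S \<and> W k = T \<and>
     (\<forall>i<k. W (Suc i) \<subset> W i \<and> even (card (induced_edges E (W i))) \<and> independent E (W i - W (Suc i)))"
proof (induction rule: converse_rtranclp_induct)
  case base
  show ?case by (intro exI[of _ "\<lambda>_. T"] exI[of _ 0]) auto
next
  case (step S S')
  then obtain W k where W: "W 0 = S'" "W k = T"
    "\<forall>i<k. W (Suc i) \<subset> W i \<and> even (card (induced_edges E (W i))) \<and> independent E (W i - W (Suc i))"
    using mv_good by blast
  define W' where "W' = (\<lambda>i. case i of 0 \<Rightarrow> S | Suc j \<Rightarrow> W j)"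
  have "\<forall>i<Suc k. W' (Suc i) \<subset> W' i \<and> even (card (induced_edges E (W' i))) \<and> independent E (W' i - W' (Suc i))"
  proof (intro allI impI)
    fix i assume i: "i < Suc k"
    show "W' (Suc i) \<subset> W' i \<and> even (card (induced_edges E (W' i))) \<and> independent E (W' i - W' (Suc i))"
    proof (cases i)
      case 0
      then show ?thesis using step.hyps(1) step.prems W(1) unfolding W'_def mv_def ecnt_def by auto
    next
      case (Suc j)
      then show ?thesis using W(3) i unfolding W'_def by auto
    qed
  qed
  then show ?case using W unfolding W'_def by (intro exI[of _ W'] exI[of _ "Suc k"]) (auto simp: W'_def)
qed




lemma small_clique_indep:
  assumes g: "graph V E" and Y: "Y \<subseteq> V" "clique E Y" "card Y \<le> 2" "even (ecnt E Y)"
  shows "independent E Y"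
proof -
  have fY: "finite Y" using finS[OF g Y(1)] .
  have "card Y \<noteq> 2"
  proof
    assume "card Y = 2"
    then obtain u v where uv: "Y = {u, v}" "u \<noteq> v" by (auto simp: card_2_iff)
    then have e: "{u, v} \<in> E" using Y(2) unfolding clique_def by auto
    have "induced_edges E Y = {{u, v}}"
    proof
      show "induced_edges E Y \<subseteq> {{u, v}}"
      proof
        fix x assume x: "x \<in> induced_edges E Y"
        then have "card x = 2" "x \<subseteq> {u, v}" using edge_card[OF g] uv unfolding induced_edges_def by auto
        then have "x = {u, v}" using card_seteq[of "{u, v}" x] uv(2) by auto
        then show "x \<in> {{u, v}}" by simp
      qed
      show "{{u, v}} \<subseteq> induced_edges E Y" using e uv unfolding induced_edges_def by auto
    qed
    then show False using Y(4) unfolding ecnt_def by simp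
  qed
  then have "card Y \<le> Suc 0" using Y(3) by simp
  then have "\<And>x y. x \<in> Y \<Longrightarrow> y \<in> Y \<Longrightarrow> x = y" using card_le_Suc0_iff_eq[OF fY] by blast
  then show ?thesis unfolding independent_def using no_loop[OF g] by metis
qed

theorem mainTheorem9:
  fixes V :: "'a set" and E :: "'a set set" and t :: nat
  assumes "graph V E"
    and "even (card E)"
    and "t > 0"
    and "\<exists>copies :: nat \<Rightarrow> nat \<Rightarrow> 'a.
           (\<forall>i<t. induced_copy_F V E (copies i)) \<and>
           (\<forall>i<t. \<forall>j<t. i \<noteq> j \<longrightarrow> copies i ` F_verts \<inter> copies j ` F_verts = {})"
    and "\<forall>K. K \<subseteq> V \<and> clique E K \<longrightarrow> card K \<le> t"
  shows "even_decomposable V E"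
  proof -
  obtain cps :: "nat \<Rightarrow> nat \<Rightarrow> 'a" where c1: "\<forall>i<t. induced_copy_F V E (cps i)"
    and c2: "\<forall>i<t. \<forall>j<t. i \<noteq> j \<longrightarrow> cps i ` F_verts \<inter> cps j ` F_verts = {}"
    using assms(4) by blast
  have "induced_edges E V = E" using assms(1) unfolding graph_def induced_edges_def by auto
  then have evV: "even (ecnt E V)" using assms(2) unfolding ecnt_def by simp
  have cpsV: "\<forall>j<t. cps j ` F_verts \<subseteq> V" using c1 unfolding induced_copy_F_def by auto
  obtain Y' where Y': "Y' \<subseteq> V" "clique E Y'" "card Y' \<le> max 2 (t - t)" "reach E V (Y' \<union> (V - V))"
    using claim[OF assms(1) c1 c2 assms(5), of t V V] evV cpsV by auto
  have r: "reach E V Y'" using Y'(4) by simp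
  have eY: "even (ecnt E Y')" using reach_good[OF r evV] .
  have ind: "independent E Y'" using small_clique_indep[OF assms(1) Y'(1,2) _ eY] Y'(3) by simp
  have "reach E V {}"
  proof (cases "Y' = {}")
    case True then show ?thesis using r by simp
  next
    case False
    have "{} \<notin> E" using edge_card[OF assms(1), of "{}"] by auto
    then have "induced_edges E {} = {}" unfolding induced_edges_def by auto
    then have "mv E Y' {}" using False ind unfolding mv_def ecnt_def by auto
    then show ?thesis using r by (metis rtranclp.rtrancl_into_rtrancl)
  qed
  then show ?thesis unfolding even_decomposable_def using chain[OF _ evV] by blast
qed


end
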